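(* Let $n\ge 2$ and let $A\in\mathbb{R}^{n\times n}$ be the tridiagonal Toeplitz matrix with all diagonal entries equal to $b\ge 0$, all subdiagonal entries ($A_{i+1,i}$) equal to $a\ge 0$, all superdiagonal entries ($A_{i,i+1}$) equal to $c\ge0$, and all other entries zero, where $\max(a,c)>0$. Let $r(t):=r\big((1-t)A+tA^{\top}\big)$. Then on $t\in(0,1)$, $r(t)$ is concave in $t$, nondecreasing on $(0,1/2)$ and nonincreasing on $(1/2,1)$; moreover, when $a\neq c$, $r$ is strictly concave on $(0,1)$, strictly increasing on $(0,1/2)$, and strictly decreasing on $(1/2,1)$.
   Context: $r(M)$ denotes the spectral radius of a square matrix $M$. *)

theory Defs
  imports "HOL-Analysis.Convex" "Jordan_Normal_Form.Spectral_Radius"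
begin

definition tridiag_toeplitz :: "nat \<Rightarrow> real \<Rightarrow> real \<Rightarrow> real \<Rightarrow> real mat" where
  "tridiag_toeplitz n a b c = mat n n (\<lambda>(i, j).
     if i = j then b else if i = j + 1 then a else if j = i + 1 then c else 0)"

definition real_spectral_radius :: "real mat \<Rightarrow> real" where
  "real_spectral_radius M = spectral_radius (map_mat complex_of_real M)"

definition strictly_concave_on :: "real set \<Rightarrow> (real \<Rightarrow> real) \<Rightarrow> bool" where
  "strictly_concave_on S f \<longleftrightarrow> convex S \<and>
     (\<forall>x\<in>S. \<forall>y\<in>S. x \<noteq> y \<longrightarrow> (\<forall>u. 0 < u \<and> u < 1 \<longrightarrow>
        f ((1 - u) * x + u * y) > (1 - u) * f x + u * f y))"

end

theory Submission
  imports Defs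
begin


lemma row_sum:
  fixes f :: "nat \<Rightarrow> real"
  assumes "i < n"
  shows "(\<Sum>j\<in>{0..<n}. (if i = j then b else if i = j + 1 then p else if j = i + 1 then q else 0) * f j)
     = b * f i + (if 0 < i then p * f (i-1) else 0) + (if i+1 < n then q * f (i+1) else 0)"
proof -
  have "(\<Sum>j\<in>{0..<n}. (if i = j then b else if i = j + 1 then p else if j = i + 1 then q else 0) * f j)
    = (\<Sum>j\<in>{0..<n}. (if j = i then b * f j else 0) + (if 0 < i then (if j = i - 1 then p * f j else 0) else 0)
        + (if j = i+1 then q * f j else 0))"
    by (rule sum.cong) auto
  also have "\<dots> = b * f i + (if 0 < i then p * f (i-1) else 0) + (if i+1 < n then q * f (i+1) else 0)"
    using assms by (simp add: sum.distrib)
  finally show ?thesis .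
qed

lemma comb_eq:
  "(1 - t) \<cdot>\<^sub>m tridiag_toeplitz n a b c + t \<cdot>\<^sub>m (tridiag_toeplitz n a b c)\<^sup>T
   = tridiag_toeplitz n ((1-t)*a+t*c) b ((1-t)*c+t*a)"
  by (rule eq_matI) (auto simp: tridiag_toeplitz_def algebra_simps)

lemma sin_pair: "sin (x - y) + sin (x + y) = 2 * sin x * cos (y::real)"
  by (simp add: sin_add sin_diff)

lemma eig_identity:
  fixes p q b :: real and k n i :: nat
  assumes p: "p > 0" and q: "q > 0" and i: "i < n"
  defines "\<theta> \<equiv> real k * pi / real (n+1)"
  defines "\<rho> \<equiv> sqrt (p/q)"
  defines "v \<equiv> (\<lambda>j::nat. \<rho>^j * sin (real (j+1) * \<theta>))"
  shows "b * v i + (if 0 < i then p * v (i-1) else 0) + (if i+1 < n then q * v (i+1) else 0)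
    = (b + 2 * sqrt (p*q) * cos \<theta>) * v i"
proof -
  define s where "s = sqrt (p*q)"
  have rp: "\<rho> > 0" using p q by (simp add: \<rho>_def)
  have e1: "p = s * \<rho>"
  proof -
    have "s * \<rho> = sqrt (p*q*(p/q))" by (simp only: s_def \<rho>_def real_sqrt_mult)
    also have "p*q*(p/q) = p^2" using q by (simp add: field_simps power2_eq_square)
    finally have "s * \<rho> = sqrt (p^2)" .
    then show ?thesis using p by simp
  qed
  have e2: "q * \<rho> = s"
  proof -
    have "q * \<rho> = sqrt (q^2) * sqrt (p/q)" using q by (simp add: \<rho>_def)
    also have "\<dots> = sqrt (q^2*(p/q))" by (simp only: real_sqrt_mult)
    also have "q^2*(p/q) = p*q" using q by (simp add: field_simps power2_eq_square)
    finally show ?thesis by (simp only: s_def)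
  qed
  have L: "(if 0 < i then p * v (i-1) else 0) = s * \<rho>^i * sin (real i * \<theta>)"
  proof (cases i)
    case 0 then show ?thesis by simp
  next
    case (Suc m)
    then show ?thesis unfolding v_def using e1 by (simp add: algebra_simps)
  qed
  have sn: "sin (real (n+1) * \<theta>) = 0"
  proof -
    have "real (n+1) * \<theta> = real k * pi" unfolding \<theta>_def by simp
    then show ?thesis by (simp add: sin_zero_iff_int2)
  qed
  have R: "(if i+1 < n then q * v (i+1) else 0) = s * \<rho>^i * sin (real (i+2) * \<theta>)"
  proof (cases "i+1 < n")
    case True then show ?thesis unfolding v_def using e2
      by (simp add: algebra_simps)
  next
    case False then have "i + 1 = n" using i by simp
    then show ?thesis using sn by (simp add: add.commute)
  qed
  have tr: "sin (real i * \<theta>) + sin (real (i+2) * \<theta>) = 2 * sin (real (i+1) * \<theta>) * cos \<theta>"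
    using sin_pair[of "real (i+1) * \<theta>" \<theta>] by (simp add: algebra_simps)
  show ?thesis unfolding L R
    using tr unfolding v_def s_def[symmetric]
    by (simp add: algebra_simps) (metis distrib_left mult.assoc mult.commute)
qed


lemma pik: "k \<le> n \<Longrightarrow> pi * real k < pi + pi * real n"
proof -
  assume "k \<le> n"
  then have "pi * real k \<le> pi * real n" by (intro mult_left_mono) auto
  then show ?thesis using pi_gt_zero by linarith
qed

lemma cos_abs_bound:
  fixes n k :: nat
  assumes "1 \<le> k" "k \<le> n"
  shows "\<bar>cos (real k * pi / real (n+1))\<bar> \<le> cos (pi / real (n+1))"
proof -
  have n1: "real (n+1) > 0" by simp
  have a: "cos (real k * pi / real (n+1)) \<le> cos (pi / real (n+1))"
  proof (rule cos_monotone_0_pi_le)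
    show "0 \<le> pi / real (n+1)" by simp
    show "pi / real (n + 1) \<le> real k * pi / real (n + 1)"
      using assms by (intro divide_right_mono) auto
    show "real k * pi / real (n + 1) \<le> pi" using assms n1 pik[of k n] by (simp add: field_simps)
  qed
  have b: "- cos (real k * pi / real (n+1)) \<le> cos (pi / real (n+1))"
  proof -
    have "- cos (real k * pi / real (n+1)) = cos (pi - real k * pi / real (n+1))" by simp
    also have "pi - real k * pi / real (n+1) = real (n+1-k) * pi / real (n+1)"
      using assms n1 by (simp add: field_simps of_nat_diff)
    also have "cos (real (n+1-k) * pi / real (n+1)) \<le> cos (pi / real (n+1))"
    proof (rule cos_monotone_0_pi_le)
      show "0 \<le> pi / real (n+1)" by simp
      show "pi / real (n + 1) \<le> real (n+1-k) * pi / real (n + 1)"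
        using assms by (intro divide_right_mono) auto
      show "real (n+1-k) * pi / real (n + 1) \<le> pi" using assms n1 by (simp add: field_simps)
    qed
    finally show ?thesis .
  qed
  show ?thesis using a b by linarith
qed

lemma spec_rad:
  fixes n :: nat and p b q :: real
  assumes n: "n \<ge> 1" and p: "p > 0" and q: "q > 0" and b: "b \<ge> 0"
  shows "real_spectral_radius (tridiag_toeplitz n p b q) = b + 2 * sqrt (p*q) * cos (pi / real (n+1))"
proof -
  define T where "T = tridiag_toeplitz n p b q"
  define M where "M = map_mat complex_of_real T"
  define s where "s = sqrt (p*q)"
  define \<theta> where "\<theta> = (\<lambda>k::nat. real k * pi / real (n+1))"
  define lam where "lam = (\<lambda>k. b + 2 * s * cos (\<theta> k))"
  have T: "T \<in> carrier_mat n n" by (simp add: T_def tridiag_toeplitz_def)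
  have M: "M \<in> carrier_mat n n" using T by (simp add: M_def)
  have spos: "s > 0" using p q by (simp add: s_def)
  have n1: "real (n+1) > 0" by simp
  have eig: "eigenvalue M (complex_of_real (lam k))" if k: "k \<in> {1..n}" for k
  proof -
    define \<rho> where "\<rho> = sqrt (p/q)"
    define v where "v = (\<lambda>j::nat. \<rho>^j * sin (real (j+1) * \<theta> k))"
    define w where "w = vec n (\<lambda>j. complex_of_real (v j))"
    have w: "w \<in> carrier_vec n" by (simp add: w_def)
    have th: "0 < \<theta> k" "\<theta> k < pi" using k n1 pik[of k n] by (auto simp: \<theta>_def field_simps)
    have "w $ 0 \<noteq> 0" using n th using sin_gt_zero[OF th] by (simp add: w_def v_def)
    then have w0: "w \<noteq> 0\<^sub>v n" using n by auto
    have "M *\<^sub>v w = complex_of_real (lam k) \<cdot>\<^sub>v w"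
    proof (rule eq_vecI)
      show "dim_vec (M *\<^sub>v w) = dim_vec (complex_of_real (lam k) \<cdot>\<^sub>v w)" using M w by simp
      fix i assume "i < dim_vec (complex_of_real (lam k) \<cdot>\<^sub>v w)"
      then have i: "i < n" using w by simp
      have "(M *\<^sub>v w) $ i = (\<Sum>j\<in>{0..<n}. M $$ (i,j) * w $ j)"
        using i M w by (simp add: scalar_prod_def)
      also have "\<dots> = complex_of_real (\<Sum>j\<in>{0..<n}.
           (if i = j then b else if i = j + 1 then p else if j = i + 1 then q else 0) * v j)"
        using i by (simp add: M_def T_def tridiag_toeplitz_def w_def)
      also have "\<dots> = complex_of_real (lam k * v i)"
      proof -
        have "(\<Sum>j\<in>{0..<n}.
           (if i = j then b else if i = j + 1 then p else if j = i + 1 then q else 0) * v j)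
          = b * v i + (if 0 < i then p * v (i-1) else 0) + (if i+1 < n then q * v (i+1) else 0)"
          by (rule row_sum[OF i])
        also have "\<dots> = lam k * v i" unfolding v_def \<rho>_def lam_def s_def \<theta>_def
          by (rule eig_identity[OF p q i])
        finally show ?thesis by simp
      qed
      also have "\<dots> = (complex_of_real (lam k) \<cdot>\<^sub>v w) $ i" using i by (simp add: w_def)
      finally show "(M *\<^sub>v w) $ i = (complex_of_real (lam k) \<cdot>\<^sub>v w) $ i" .
    qed
    then show ?thesis unfolding eigenvalue_def eigenvector_def using M w w0 by auto
  qed
  define S where "S = (\<lambda>k. complex_of_real (lam k)) ` {1..n}"
  have inj: "inj_on (\<lambda>k. complex_of_real (lam k)) {1..n}"
  proof (rule inj_onI)
    fix k l assume k: "k \<in> {1..n}" and l: "l \<in> {1..n}"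
      and e: "complex_of_real (lam k) = complex_of_real (lam l)"
    then have "cos (\<theta> k) = cos (\<theta> l)" using spos by (simp add: lam_def)
    moreover have "0 \<le> \<theta> k" "\<theta> k \<le> pi" "0 \<le> \<theta> l" "\<theta> l \<le> pi"
      using k l n1 pik[of k n] pik[of l n] by (auto simp: \<theta>_def field_simps)
    ultimately have "\<theta> k = \<theta> l" using cos_inj_pi by blast
    then show "k = l" using n1 by (simp add: \<theta>_def)
  qed
  have cS: "card S = n" using inj by (simp add: S_def card_image)
  have sub: "S \<subseteq> spectrum M" using eig by (auto simp: S_def spectrum_def)
  have "S = spectrum M"
    by (rule card_subset_eq[OF card_finite_spectrum(1)[OF M] sub])
       (use card_finite_spectrum(2)[OF M] cS card_mono[OF card_finite_spectrum(1)[OF M] sub] in linarith)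
  then have "real_spectral_radius T = Max (norm ` S)"
    by (simp add: real_spectral_radius_def M_def[symmetric] spectral_radius_def)
  also have "norm ` S = (\<lambda>k. \<bar>lam k\<bar>) ` {1..n}"
    unfolding S_def image_image by simp
  also have "Max ((\<lambda>k. \<bar>lam k\<bar>) ` {1..n}) = lam 1"
  proof (rule Max_eqI)
    show "finite ((\<lambda>k. \<bar>lam k\<bar>) ` {1..n})" by simp
    fix y assume "y \<in> (\<lambda>k. \<bar>lam k\<bar>) ` {1..n}"
    then obtain k where k: "k \<in> {1..n}" and y: "y = \<bar>lam k\<bar>" by auto
    have "\<bar>lam k\<bar> \<le> \<bar>b\<bar> + \<bar>2 * s * cos (\<theta> k)\<bar>"
      unfolding lam_def by (rule abs_triangle_ineq)
    also have "\<dots> = b + 2 * s * \<bar>cos (\<theta> k)\<bar>" using b spos by (simp add: abs_mult)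
    also have "\<dots> \<le> b + 2 * s * cos (\<theta> 1)"
      using cos_abs_bound[of k n] k spos by (simp add: \<theta>_def)
    finally show "y \<le> lam 1" by (simp add: y lam_def)
  next
    have t1: "\<theta> 1 = pi / real (n+1)" by (simp add: \<theta>_def)
    have "pi / real (n+1) \<le> pi / 2" by (rule divide_left_mono) (use n in auto)
    moreover have "0 \<le> pi / real (n+1)" by simp
    moreover have "- (pi/2) \<le> 0" by simp
    ultimately have "cos (\<theta> 1) \<ge> 0" unfolding t1 by (intro cos_ge_zero) linarith+
    then have "lam 1 \<ge> 0" using b spos by (simp add: lam_def)
    then show "lam 1 \<in> (\<lambda>k. \<bar>lam k\<bar>) ` {1..n}" using n by force
  qed
  finally show ?thesis by (simp add: T_def lam_def s_def \<theta>_def)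
qed



lemma gm_ineq:
  fixes p1 q1 p2 q2 u v :: real
  assumes "p1 \<ge> 0" "q1 \<ge> 0" "p2 \<ge> 0" "q2 \<ge> 0" "u \<ge> 0" "v \<ge> 0"
  shows "u * sqrt (p1*q1) + v * sqrt (p2*q2) \<le> sqrt ((u*p1+v*p2)*(u*q1+v*q2))"
    and "u > 0 \<Longrightarrow> v > 0 \<Longrightarrow> p1*q2 \<noteq> p2*q1 \<Longrightarrow>
         u * sqrt (p1*q1) + v * sqrt (p2*q2) < sqrt ((u*p1+v*p2)*(u*q1+v*q2))"
proof -
  define A1 where "A1 = sqrt p1"
  define B1 where "B1 = sqrt q1"
  define A2 where "A2 = sqrt p2"
  define B2 where "B2 = sqrt q2"
  have sq: "p1 = A1^2" "q1 = B1^2" "p2 = A2^2" "q2 = B2^2"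
    using assms by (simp_all add: A1_def B1_def A2_def B2_def)
  have s1: "sqrt (p1*q1) = A1*B1" by (simp add: A1_def B1_def real_sqrt_mult)
  have s2: "sqrt (p2*q2) = A2*B2" by (simp add: A2_def B2_def real_sqrt_mult)
  have key: "(u*(A1*B1) + v*(A2*B2))^2 + u*v*(A1*B2-A2*B1)^2
      = (u*A1^2+v*A2^2)*(u*B1^2+v*B2^2)"
    by (simp add: power2_eq_square algebra_simps)
  have nn: "u*v*(A1*B2-A2*B1)^2 \<ge> 0" using assms by simp
  have pr: "(u*p1+v*p2)*(u*q1+v*q2) = (u*A1^2+v*A2^2)*(u*B1^2+v*B2^2)" using sq by simp
  show "u * sqrt (p1*q1) + v * sqrt (p2*q2) \<le> sqrt ((u*p1+v*p2)*(u*q1+v*q2))"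
    unfolding s1 s2 by (rule real_le_rsqrt) (use key nn pr in linarith)
  assume u: "u > 0" and v: "v > 0" and ne: "p1*q2 \<noteq> p2*q1"
  have "A1*B2 \<noteq> A2*B1"
  proof
    assume "A1*B2 = A2*B1"
    then have "(A1*B2)^2 = (A2*B1)^2" by simp
    then show False using ne sq by (simp add: power_mult_distrib mult.commute)
  qed
  then have "(A1*B2-A2*B1)^2 > 0" by simp
  then have pos: "u*v*(A1*B2-A2*B1)^2 > 0" using u v by simp
  show "u * sqrt (p1*q1) + v * sqrt (p2*q2) < sqrt ((u*p1+v*p2)*(u*q1+v*q2))"
    unfolding s1 s2 by (rule real_less_rsqrt) (use key pos pr in linarith)
qed

lemma pq_id: "((1-t)*a+t*c) * ((1-t)*c+t*a) = a*c + (c-a)^2 * (t*(1-t::real))"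
  by (simp add: power2_eq_square algebra_simps)

lemma inc_part:
  fixes s t :: real
  assumes "s < t" "t \<le> 1/2"
  shows "s*(1-s) < t*(1-t)"
proof -
  have "t*(1-t) - s*(1-s) = (t-s)*(1-s-t)" by (simp add: algebra_simps)
  moreover have "(t-s)*(1-s-t) > 0" using assms by (intro mult_pos_pos) auto
  ultimately show ?thesis by linarith
qed

lemma dec_part:
  fixes s t :: real
  assumes "s < t" "1/2 \<le> s"
  shows "s*(1-s) > t*(1-t)"
proof -
  have "s*(1-s) - t*(1-t) = (t-s)*(s+t-1)" by (simp add: algebra_simps)
  moreover have "(t-s)*(s+t-1) > 0" using assms by (intro mult_pos_pos) auto
  ultimately show ?thesis by linarith
qed

theorem theorem2:
  fixes n :: nat and a b c :: real and r :: "real \<Rightarrow> real"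
  assumes "n \<ge> 2" and "a \<ge> 0" and "b \<ge> 0" and "c \<ge> 0" and "max a c > 0"
    and "\<And>t. r t = real_spectral_radius
           ((1 - t) \<cdot>\<^sub>m tridiag_toeplitz n a b c + t \<cdot>\<^sub>m (tridiag_toeplitz n a b c)\<^sup>T)"
  shows "concave_on {0<..<1} r
    \<and> monotone_on {0<..<1/2} (\<le>) (\<le>) r
    \<and> monotone_on {1/2<..<1} (\<le>) (\<ge>) r
    \<and> (a \<noteq> c \<longrightarrow>
         strictly_concave_on {0<..<1} r
       \<and> monotone_on {0<..<1/2} (<) (<) r
       \<and> monotone_on {1/2<..<1} (<) (>) r)"
proof -
  define P where "P = (\<lambda>t::real. (1-t)*a+t*c)"
  define Q where "Q = (\<lambda>t::real. (1-t)*c+t*a)"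
  define K where "K = 2 * cos (pi / real (n+1))"
  define g where "g = (\<lambda>t. sqrt (P t * Q t))"
  have ac: "a + c > 0" using assms(2,4,5) by (auto simp: max_def split: if_splits)
  have Ppos: "P t > 0" if "t \<in> {0<..<1}" for t
  proof -
    have "(1-t)*a \<ge> 0" "t*c \<ge> 0" "(1-t)*a + t*c \<noteq> 0"
      using that assms(2,4) ac
      by (auto simp: mult_nonneg_nonneg add_nonneg_eq_0_iff)
    then show ?thesis unfolding P_def by linarith
  qed
  have Qpos: "Q t > 0" if "t \<in> {0<..<1}" for t
  proof -
    have "(1-t)*c \<ge> 0" "t*a \<ge> 0" "(1-t)*c + t*a \<noteq> 0"
      using that assms(2,4) ac
      by (auto simp: mult_nonneg_nonneg add_nonneg_eq_0_iff)
    then show ?thesis unfolding Q_def by linarith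
  qed
  have Kpos: "K > 0"
  proof -
    have "pi / real (n+1) < pi / 2" by (rule divide_strict_left_mono) (use assms(1) in auto)
    moreover have "0 < pi / real (n+1)" by simp
    moreover have "- (pi/2) < 0" by simp
    ultimately show ?thesis unfolding K_def by (intro mult_pos_pos cos_gt_zero_pi) linarith+
  qed
  have rt: "r t = b + K * g t" if t: "t \<in> {0<..<1}" for t
  proof -
    have "real_spectral_radius (tridiag_toeplitz n (P t) b (Q t)) = b + 2 * sqrt (P t * Q t) * cos (pi / real (n+1))"
      by (rule spec_rad) (use assms(1,3) Ppos[OF t] Qpos[OF t] in auto)
    then show ?thesis unfolding assms(6) comb_eq K_def g_def P_def Q_def by simp
  qed
  have gsq: "P t * Q t = a*c + (c-a)^2 * (t*(1-t))" for t
    unfolding P_def Q_def by (rule pq_id)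
  have lin: "P ((1-u)*x+u*y) = (1-u) * P x + u * P y" "Q ((1-u)*x+u*y) = (1-u) * Q x + u * Q y"
    for u x y
    by (simp_all add: P_def Q_def algebra_simps)
  have cross: "P x * Q y - P y * Q x = (c-a)*(a+c)*(x-y)" for x y
    by (simp add: P_def Q_def algebra_simps)
  have cvx: "convex {0<..<(1::real)}" by (rule convex_real_interval)
  have inS: "(1-u)*x+u*y \<in> {0<..<1}" if "x \<in> {0<..<1}" "y \<in> {0<..<1}" "0 \<le> u" "u \<le> 1"
    for x y u :: real
    using convexD[OF cvx that(1,2), of "1-u" u] that(3,4) by simp
  have gconc: "(1-u) * g x + u * g y \<le> g ((1-u)*x+u*y)"
    if x: "x \<in> {0<..<1}" and y: "y \<in> {0<..<1}" and u: "0 \<le> u" "u \<le> 1" for x y u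
    unfolding g_def lin
    by (rule gm_ineq(1)) (use Ppos[OF x] Qpos[OF x] Ppos[OF y] Qpos[OF y] u in auto)
  have gsconc: "(1-u) * g x + u * g y < g ((1-u)*x+u*y)"
    if x: "x \<in> {0<..<1}" and y: "y \<in> {0<..<1}" and u: "0 < u" "u < 1"
       and xy: "x \<noteq> y" and ne: "a \<noteq> c" for x y u
  proof -
    have "(c-a)*(a+c)*(x-y) \<noteq> 0" using xy ne ac by simp
    then have "P x * Q y \<noteq> P y * Q x" using cross[of x y] by linarith
    then show ?thesis unfolding g_def lin
      by (intro gm_ineq(2)) (use Ppos[OF x] Qpos[OF x] Ppos[OF y] Qpos[OF y] u in auto)
  qed
  have rconc: "(1-u) * r x + u * r y \<le> r ((1-u)*x+u*y)"
    if x: "x \<in> {0<..<1}" and y: "y \<in> {0<..<1}" and u: "0 \<le> u" "u \<le> 1" for x y u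
  proof -
    have "(1-u) * r x + u * r y = b + K * ((1-u) * g x + u * g y)"
      using rt[OF x] rt[OF y] by (simp add: algebra_simps)
    also have "\<dots> \<le> b + K * g ((1-u)*x+u*y)"
      using gconc[OF x y u] Kpos by (simp add: mult_left_mono)
    also have "\<dots> = r ((1-u)*x+u*y)" using rt[OF inS[OF x y u]] by simp
    finally show ?thesis .
  qed
  have rsconc: "(1-u) * r x + u * r y < r ((1-u)*x+u*y)"
    if x: "x \<in> {0<..<1}" and y: "y \<in> {0<..<1}" and u: "0 < u" "u < 1"
       and xy: "x \<noteq> y" and ne: "a \<noteq> c" for x y u
  proof -
    have "(1-u) * r x + u * r y = b + K * ((1-u) * g x + u * g y)"
      using rt[OF x] rt[OF y] by (simp add: algebra_simps)
    also have "\<dots> < b + K * g ((1-u)*x+u*y)"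
      using gsconc[OF x y u xy ne] Kpos by simp
    also have "\<dots> = r ((1-u)*x+u*y)" using rt[OF inS[OF x y]] u by simp
    finally show ?thesis .
  qed
  have C1: "concave_on {0<..<1} r"
    unfolding concave_on_iff
  proof (intro conjI cvx ballI allI impI)
    fix x y u v :: real
    assume x: "x \<in> {0<..<1}" and y: "y \<in> {0<..<1}" and u: "0 \<le> u" and v: "0 \<le> v" and uv: "u + v = 1"
    then have u1: "u = 1 - v" by simp
    have "v \<le> 1" using uv u by simp
    from rconc[OF x y v this] show "u * r x + v * r y \<le> r (u *\<^sub>R x + v *\<^sub>R y)"
      unfolding u1 by simp
  qed
  have mono1: "r x \<le> r y" if "x \<in> {0<..<1/2}" "y \<in> {0<..<1/2}" "x \<le> y" for x y
  proof (cases "x = y")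
    case False
    then have "x*(1-x) < y*(1-y)" using that by (intro inc_part) auto
    then have "P x * Q x \<le> P y * Q y" unfolding gsq by (intro add_left_mono mult_left_mono) auto
    then have "g x \<le> g y" unfolding g_def by (rule real_sqrt_le_mono)
    then show ?thesis using rt[of x] rt[of y] that Kpos by (simp add: mult_left_mono)
  qed simp
  have mono2: "r x \<ge> r y" if "x \<in> {1/2<..<1}" "y \<in> {1/2<..<1}" "x \<le> y" for x y
  proof (cases "x = y")
    case False
    then have "x*(1-x) > y*(1-y)" using that by (intro dec_part) auto
    then have "P x * Q x \<ge> P y * Q y" unfolding gsq by (intro add_left_mono mult_left_mono) auto
    then have "g x \<ge> g y" unfolding g_def by (rule real_sqrt_le_mono)
    then show ?thesis using rt[of x] rt[of y] that Kpos by (simp add: mult_left_mono)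
  qed simp
  have smono1: "r x < r y" if "x \<in> {0<..<1/2}" "y \<in> {0<..<1/2}" "x < y" "a \<noteq> c" for x y
  proof -
    have "x*(1-x) < y*(1-y)" using that by (intro inc_part) auto
    moreover have "(c-a)^2 > 0" using that by simp
    ultimately have "P x * Q x < P y * Q y" unfolding gsq by simp
    then have "g x < g y" unfolding g_def by (rule real_sqrt_less_mono)
    then show ?thesis using rt[of x] rt[of y] that Kpos by simp
  qed
  have smono2: "r x > r y" if "x \<in> {1/2<..<1}" "y \<in> {1/2<..<1}" "x < y" "a \<noteq> c" for x y
  proof -
    have "x*(1-x) > y*(1-y)" using that by (intro dec_part) auto
    moreover have "(c-a)^2 > 0" using that by simp
    ultimately have "P x * Q x > P y * Q y" unfolding gsq by simp
    then have "g x > g y" unfolding g_def by (rule real_sqrt_less_mono)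
    then show ?thesis using rt[of x] rt[of y] that Kpos by simp
  qed
  have SC: "strictly_concave_on {0<..<1} r" if "a \<noteq> c"
    unfolding strictly_concave_on_def using cvx rsconc that by auto
  show ?thesis
    using C1 SC mono1 mono2 smono1 smono2 by (auto simp: monotone_on_def)
qed

end
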